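(* Let $M\geq 1$ and consider the bilateral cooperation model described in the context, restricted to submodular utility vectors. Then every DSIC mechanism that works for arbitrary submodular valuations (i.e. is DSIC and is evaluated over all pairs of submodular buyer and seller vectors) has competitive ratio at most $1/H_M$, where $H_M=\sum_{j=1}^M \frac1j$ is the $M$-th harmonic number.
   Context: Bilateral cooperation model: there are two agents, a buyer and a seller, and options $0,1,\dots,M$. A buyer utility vector is $b=(b_1,\dots,b_M)\in\mathbb{R}^M$ and a seller utility vector is $s=(s_1,\dots,s_M)\in\mathbb{R}^M$; by convention $b_0=s_0=0$. A vector $v=(v_1,\dots,v_M)$ (with $v_0=0$) is submodular if $v_{i+1}-v_i\leq v_i-v_{i-1}$ for every $i\in\{1,\dots,M-1\}$. Define $\mathrm{Feasible}(b,s)=\{i\in\{0,\dots,M\}: b_i\geq 0 \text{ and } s_i\geq 0\}$ and $OPT(b,s)=\max_{i\in \mathrm{Feasible}(b,s)}(b_i+s_i)$. A mechanism is a function $r$ mapping each pair of reported vectors $(b',s')$ to a probability vector $(r_0(b',s'),\dots,r_M(b',s'))$. The mechanism is DSIC if for all true vectors $b,s$ and reports $b',s'$ (all in the admissible class): $\sum_{i=1}^M r_i(b,s')\,b_i\geq \sum_{i=1}^M r_i(b',s')\,b_i$ and $\sum_{i=1}^M r_i(b',s)\,s_i\geq \sum_{i=1}^M r_i(b',s')\,s_i$. The gain is $G_r(b,s)=\sum_{i=1}^M r_i(b,s)(b_i+s_i)$ and the competitive ratio is the minimum of $G_r(b,s)/OPT(b,s)$ over admissible (here: submodular) $b,s$.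 *)

theory Defs
  imports "HOL-Analysis.Analysis" "HOL-Library.Extended_Real"
begin

text \<open>Utility vectors over options 0..M are functions nat => real; index 0 carries the
convention v 0 = 0, and entries beyond M are fixed to 0 so that they carry no information.\<close>

definition submodular_vec :: "nat \<Rightarrow> (nat \<Rightarrow> real) \<Rightarrow> bool" where
  "submodular_vec M v \<longleftrightarrow> v 0 = 0 \<and> (\<forall>i>M. v i = 0) \<and>
     (\<forall>i\<in>{1..M-1}. v (i+1) - v i \<le> v i - v (i-1))"

definition Feasible :: "nat \<Rightarrow> (nat \<Rightarrow> real) \<Rightarrow> (nat \<Rightarrow> real) \<Rightarrow> nat set" where
  "Feasible M b s = {i\<in>{0..M}. b i \<ge> 0 \<and> s i \<ge> 0}"

definition OPT :: "nat \<Rightarrow> (nat \<Rightarrow> real) \<Rightarrow> (nat \<Rightarrow> real) \<Rightarrow> real" where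
  "OPT M b s = Max ((\<lambda>i. b i + s i) ` Feasible M b s)"

type_synonym mechanism = "(nat \<Rightarrow> real) \<Rightarrow> (nat \<Rightarrow> real) \<Rightarrow> nat \<Rightarrow> real"

definition is_mechanism :: "nat \<Rightarrow> mechanism \<Rightarrow> bool" where
  "is_mechanism M r \<longleftrightarrow> (\<forall>b s. submodular_vec M b \<longrightarrow> submodular_vec M s \<longrightarrow>
      (\<forall>i\<in>{0..M}. r b s i \<ge> 0) \<and> (\<Sum>i=0..M. r b s i) = 1)"

definition DSIC :: "nat \<Rightarrow> mechanism \<Rightarrow> bool" where
  "DSIC M r \<longleftrightarrow> (\<forall>b s b' s'. submodular_vec M b \<longrightarrow> submodular_vec M s \<longrightarrow>
      submodular_vec M b' \<longrightarrow> submodular_vec M s' \<longrightarrow>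
      (\<Sum>i=1..M. r b s' i * b i) \<ge> (\<Sum>i=1..M. r b' s' i * b i) \<and>
      (\<Sum>i=1..M. r b' s i * s i) \<ge> (\<Sum>i=1..M. r b' s' i * s i))"

definition gain :: "nat \<Rightarrow> mechanism \<Rightarrow> (nat \<Rightarrow> real) \<Rightarrow> (nat \<Rightarrow> real) \<Rightarrow> real" where
  "gain M r b s = (\<Sum>i=1..M. r b s i * (b i + s i))"

text \<open>Competitive ratio: infimum (in the extended reals) of G/OPT over submodular pairs
with OPT > 0 (pairs with OPT = 0 make the ratio undefined and are excluded).\<close>
definition competitive_ratio :: "nat \<Rightarrow> mechanism \<Rightarrow> ereal" where
  "competitive_ratio M r = (INF bs \<in> {(b, s). submodular_vec M b \<and> submodular_vec M s \<and> OPT M b s > 0}.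
      ereal (gain M r (fst bs) (snd bs) / OPT M (fst bs) (snd bs)))"

end

theory Submission
  imports Defs
begin


lemma sum_harm: "(\<Sum>i=1..n. harm i :: real) = real (n+1) * harm n - real n"
proof (induction n)
  case 0 then show ?case by (simp add: harm_def)
next
  case (Suc n)
  have "(\<Sum>i=1..Suc n. harm i :: real) = (\<Sum>i=1..n. harm i) + harm (Suc n)" by simp
  also have "\<dots> = real (n+1) * harm n - real n + harm (Suc n)" using Suc by simp
  also have "\<dots> = real (Suc n + 1) * harm (Suc n) - real (Suc n)"
    by (simp add: harm_Suc field_simps)
  finally show ?case .
qed

lemma sum_harm': "1 \<le> j \<Longrightarrow> (\<Sum>i\<in>{1..<j}. harm i :: real) = real j * harm (j-1) - real (j-1)"
proof -
  assume "1 \<le> j"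
  then have "{1..<j} = {1..j-1}" by auto
  then show ?thesis using sum_harm[of "j-1"] \<open>1 \<le> j\<close> by simp
qed

lemma core:
  fixes a E B D :: "nat \<Rightarrow> real" and t eps eta :: real and M :: nat
  assumes M1: "M \<ge> 1" and eps: "0 < eps" "eps \<le> 1" and eta: "0 < eta"
  and t0: "0 \<le> t"
  and ha: "\<And>j. 1 \<le> j \<Longrightarrow> j \<le> M \<Longrightarrow> a j \<le> 1"
  and hB: "\<And>j. 1 \<le> j \<Longrightarrow> j \<le> M \<Longrightarrow> B j \<ge> 0"
  and hE: "\<And>j. 1 \<le> j \<Longrightarrow> j \<le> M \<Longrightarrow> E j \<le> real j * a j + B j"
  and hg: "\<And>j. 1 \<le> j \<Longrightarrow> j \<le> M \<Longrightarrow> t * real j \<le> eps * (real j * a j - E j) - D j * B j + E j"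
  and hd: "\<And>j. 2 \<le> j \<Longrightarrow> j \<le> M \<Longrightarrow>
      eps * (real j * a j - E j) - D j * B j \<ge> eps * (real j * a (j-1) - E (j-1)) - D j * B (j-1)"
  and hD: "\<And>j. 1 \<le> j \<Longrightarrow> j \<le> M \<Longrightarrow> D j \<ge> 2"
  and hD1: "real M \<le> eta * (D 1 - 1)"
  and hD2: "\<And>j. 2 \<le> j \<Longrightarrow> j \<le> M \<Longrightarrow> D j * real M \<le> eta * eps * (D (j-1) - 1)"
  shows "t \<le> 1 / harm M + eta + eps"
proof -
  have Bb: "B j * (D j - 1) \<le> real M" if j: "1 \<le> j" "j \<le> M" for j
  proof -
    have 1: "t * real j \<le> eps * (real j * a j) + (1 - eps) * E j - D j * B j"
      using hg[OF j] by (simp add: algebra_simps)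
    have 2: "(1 - eps) * E j \<le> (1 - eps) * (real j * a j + B j)"
      using hE[OF j] eps by (intro mult_left_mono) auto
    have 8: "(1 - eps) * (real j * a j + B j) = real j * a j + B j - eps * (real j * a j) - eps * B j"
      by (simp add: algebra_simps)
    have 3: "real j * a j \<le> real j" using ha[OF j] by (simp add: mult_left_le)
    have 4: "t * real j \<ge> 0" using t0 by simp
    have 5: "eps * B j \<ge> 0" using hB[OF j] eps by simp
    have 6: "real j \<le> real M" using j by simp
    have 7: "B j * (D j - 1) = D j * B j - B j" by (simp add: algebra_simps)
    show ?thesis unfolding 7 using 1 2 8 3 4 5 6 by linarith
  qed
  have B1: "B 1 \<le> eta"
  proof -
    have "B 1 * (D 1 - 1) \<le> eta * (D 1 - 1)" using Bb[of 1] hD1 M1 by simp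
    moreover have "D 1 - 1 > 0" using hD[of 1] M1 by simp
    ultimately show ?thesis by simp
  qed
  have DB: "D j * B (j-1) \<le> eta * eps" if j: "2 \<le> j" "j \<le> M" for j
  proof -
    have "D (j-1) \<ge> 2" using hD[of "j-1"] j by simp
    then have p: "D (j-1) - 1 > 0" by simp
    have "D j * B (j-1) * (D (j-1) - 1) = D j * (B (j-1) * (D (j-1) - 1))" by simp
    also have "\<dots> \<le> D j * real M" using Bb[of "j-1"] j hD[of j] by (intro mult_left_mono) auto
    also have "\<dots> \<le> eta * eps * (D (j-1) - 1)" using hD2[OF j] .
    finally show ?thesis using p by simp
  qed
  define g where "g j = real j * a j - E j" for j
  have A: "(1 - eps) * g j \<le> real j * a j - t * real j" if j: "1 \<le> j" "j \<le> M" for j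
  proof -
    have "D j * B j \<ge> 0" using hD[OF j] hB[OF j] by simp
    then show ?thesis using hg[OF j] unfolding g_def by (simp add: algebra_simps)
  qed
  have Bs: "g j \<ge> g (j-1) + a (j-1) - eta" if j: "2 \<le> j" "j \<le> M" for j
  proof -
    have "D j * B j \<ge> 0" using hD[of j] hB[of j] j by simp
    have rj: "real j = real (j-1) + 1" using j by simp
    have "eps * g j \<ge> eps * (g (j-1) + a (j-1)) - eta * eps"
      using hd[OF j] DB[OF j] \<open>D j * B j \<ge> 0\<close> unfolding g_def rj by (simp add: algebra_simps)
    then have "eps * g j \<ge> eps * (g (j-1) + a (j-1) - eta)" by (simp add: algebra_simps)
    then show ?thesis using eps by simp
  qed
  have C: "g 1 \<ge> - eta" using hE[of 1] B1 M1 unfolding g_def by simp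
  have S: "g j \<ge> (\<Sum>i\<in>{1..<j}. a i) - real j * eta" if j: "1 \<le> j" "j \<le> M" for j
    using j
  proof (induction j)
    case 0 then show ?case by simp
  next
    case (Suc n)
    show ?case
    proof (cases "n = 0")
      case True then show ?thesis using C by simp
    next
      case False
      then have IH: "g n \<ge> (\<Sum>i\<in>{1..<n}. a i) - real n * eta" using Suc by simp
      have "g (Suc n) \<ge> g n + a n - eta" using Bs[of "Suc n"] Suc False by simp
      moreover have "(\<Sum>i\<in>{1..<Suc n}. a i) = (\<Sum>i\<in>{1..<n}. a i) + a n" using False by simp
      ultimately show ?thesis using IH by (simp add: algebra_simps)
    qed
  qed
  have Aj: "real j * a j \<ge> real j * (t - eta) + (1 - eps) * (\<Sum>i\<in>{1..<j}. a i)" if j: "1 \<le> j" "j \<le> M" for j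
  proof -
    have "(1 - eps) * g j \<ge> (1 - eps) * ((\<Sum>i\<in>{1..<j}. a i) - real j * eta)"
      using S[OF j] eps by (intro mult_left_mono) auto
    moreover have "eps * (real j * eta) \<ge> 0" using eps eta by simp
    ultimately show ?thesis using A[OF j] by (simp add: algebra_simps)
  qed
  show ?thesis
  proof (cases "t < eta")
    case True
    have "1 / harm M > (0::real)" using harm_pos[of M] M1 by simp
    then show ?thesis using eps True by linarith
  next
    case False
    define HM :: real where "HM = harm M"
    have HM: "HM > 0" using harm_pos[of M] M1 unfolding HM_def by simp
    define tau where "tau = (t - eta) / (1 + eps * HM)"
    have tau0: "tau \<ge> 0" using False HM eps unfolding tau_def by simp
    have "1 + eps * HM > 0" using HM eps by (simp add: add_pos_pos)
    then have tauE: "t - eta = tau * (1 + eps * HM)" unfolding tau_def by simp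
    have main: "a j \<ge> tau * harm j" if j: "1 \<le> j" "j \<le> M" for j
      using j
    proof (induction j rule: less_induct)
      case (less j)
      have "tau * (real j * harm (j-1) - real (j-1)) = (\<Sum>i\<in>{1..<j}. tau * harm i)"
        using sum_harm'[of j] less by (simp add: sum_distrib_left[symmetric])
      also have "\<dots> \<le> (\<Sum>i\<in>{1..<j}. a i)"
        using less by (intro sum_mono) auto
      finally have s: "(\<Sum>i\<in>{1..<j}. a i) \<ge> tau * (real j * harm (j-1) - real (j-1))" .
      define h :: real where "h = harm (j-1)"
      have hj: "harm j = h + 1 / real j"
        using less harm_Suc[of "j-1"] unfolding h_def by (cases j) (auto simp: inverse_eq_divide)
      have hle: "h \<le> HM" unfolding h_def HM_def by (rule harm_mono) (use less in simp)
      have rj: "real (j-1) = real j - 1" using less by simp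
      have jpos: "real j > 0" using less by simp
      have "real j * a j \<ge> real j * (t - eta) + (1 - eps) * (tau * (real j * h - (real j - 1)))"
      proof -
        have "(1 - eps) * (\<Sum>i\<in>{1..<j}. a i) \<ge> (1 - eps) * (tau * (real j * harm (j-1) - real (j-1)))"
          using s eps by (intro mult_left_mono) auto
        then show ?thesis using Aj[of j] less unfolding h_def rj by linarith
      qed
      also have "real j * (t - eta) + (1 - eps) * (tau * (real j * h - (real j - 1)))
          = tau * (real j * h + 1) + tau * eps * (real j * (HM - h) + real j - 1)"
        unfolding tauE by (simp add: algebra_simps)
      also have "\<dots> \<ge> tau * (real j * h + 1)"
      proof -
        have "real j * (HM - h) \<ge> 0" using hle less by simp
        moreover have "real j \<ge> 1" using less by simp
        ultimately have "real j * (HM - h) + real j - 1 \<ge> 0" by linarith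
        then show ?thesis using tau0 eps by simp
      qed
      finally have "real j * a j \<ge> real j * (tau * harm j)"
        unfolding hj using jpos by (simp add: algebra_simps)
      then show ?case using jpos by simp
    qed
    have "tau * HM \<le> 1" using main[of M] ha[of M] M1 unfolding HM_def by simp
    then have "tau \<le> 1 / HM" using HM by (simp add: field_simps)
    moreover have "1 + eps * HM > 0" using HM eps by (simp add: add_pos_pos)
    ultimately have "tau * (1 + eps * HM) \<le> 1 / HM * (1 + eps * HM)"
      by (intro mult_right_mono) auto
    then have "t - eta \<le> (1 + eps * HM) / HM" using tauE by simp
    also have "\<dots> = 1 / HM + eps" using HM by (simp add: field_simps)
    finally show ?thesis unfolding HM_def by simp
  qed
qed



definition bvec :: "nat \<Rightarrow> real \<Rightarrow> real \<Rightarrow> nat \<Rightarrow> nat \<Rightarrow> real" where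
  "bvec M eps d j k = (if k = 0 \<or> M < k then 0 else eps * (real j - real k) - d * max 0 (real k - real j))"

definition svec :: "nat \<Rightarrow> nat \<Rightarrow> real" where
  "svec M k = (if k = 0 \<or> M < k then 0 else real k)"

lemma svec_sub: "submodular_vec M (svec M)"
  unfolding submodular_vec_def svec_def by auto

lemma bvec_sub:
  assumes "0 \<le> eps" "0 \<le> d" "1 \<le> j"
  shows "submodular_vec M (bvec M eps d j)"
  unfolding submodular_vec_def
proof (intro conjI ballI allI impI)
  fix i assume i: "i \<in> {1..M-1}"
  then have i1: "1 \<le> i" "i + 1 \<le> M" by auto
  show "bvec M eps d j (i + 1) - bvec M eps d j i \<le> bvec M eps d j i - bvec M eps d j (i - 1)"
  proof (cases "i = 1")
    case True
    have e: "eps * real j \<ge> 0" using assms by simp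
    have "j = 1 \<or> j = 2 \<or> j > 2" using assms by auto
    then show ?thesis using i1 assms True e unfolding bvec_def by (auto simp: max_def algebra_simps)
  next
    case False
    then have "i \<ge> 2" using i1 by simp
    have "j < i \<or> j = i \<or> j = i + 1 \<or> j > i + 1" by auto
    then show ?thesis using i1 assms \<open>i \<ge> 2\<close> unfolding bvec_def
      by (auto simp: max_def algebra_simps)
  qed
qed (auto simp: bvec_def)

lemma bvec_OPT:
  assumes "0 < eps" "eps \<le> 1" "0 \<le> d" "1 \<le> j" "j \<le> M"
  shows "OPT M (bvec M eps d j) (svec M) = real j"
proof -
  have F: "Feasible M (bvec M eps d j) (svec M) = {0..j}"
  proof (rule set_eqI)
    fix k
    show "k \<in> Feasible M (bvec M eps d j) (svec M) \<longleftrightarrow> k \<in> {0..j}"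
    proof (cases "k \<le> j")
      case True
      then show ?thesis using assms unfolding Feasible_def bvec_def svec_def by auto
    next
      case False
      then have "real k - real j > 0" by simp
      then have "d * max 0 (real k - real j) \<ge> 0" using assms by simp
      moreover have "eps * (real j - real k) < 0" using False assms by (simp add: mult_pos_neg)
      ultimately show ?thesis using False unfolding Feasible_def bvec_def svec_def by auto
    qed
  qed
  show ?thesis unfolding OPT_def F
  proof (rule Max_eqI)
    show "finite ((\<lambda>i. bvec M eps d j i + svec M i) ` {0..j})" by simp
  next
    fix y assume "y \<in> (\<lambda>i. bvec M eps d j i + svec M i) ` {0..j}"
    then obtain k where k: "k \<le> j" "y = bvec M eps d j k + svec M k" by auto
    show "y \<le> real j"
    proof (cases "k = 0")
      case True then show ?thesis using k unfolding bvec_def svec_def by simp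
    next
      case False
      then have "y = eps * (real j - real k) + real k" using k assms unfolding bvec_def svec_def by auto
      moreover have "eps * (real j - real k) \<le> 1 * (real j - real k)"
        using k assms by (intro mult_right_mono) auto
      ultimately show ?thesis by simp
    qed
  next
    show "real j \<in> (\<lambda>i. bvec M eps d j i + svec M i) ` {0..j}"
    proof
      show "real j = bvec M eps d j j + svec M j" using assms unfolding bvec_def svec_def by auto
    qed auto
  qed
qed

lemma bvec_sum:
  "(\<Sum>k=1..M. q k * bvec M eps d j k) =
     eps * (real j * (\<Sum>k=1..M. q k) - (\<Sum>k=1..M. real k * q k)) - d * (\<Sum>k=1..M. max 0 (real k - real j) * q k)"
proof -
  have "(\<Sum>k=1..M. q k * bvec M eps d j k) =
     (\<Sum>k=1..M. eps * real j * q k - eps * (real k * q k) - d * (max 0 (real k - real j) * q k))"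
    by (rule sum.cong) (auto simp: bvec_def algebra_simps)
  also have "\<dots> = eps * real j * (\<Sum>k=1..M. q k) - eps * (\<Sum>k=1..M. real k * q k) - d * (\<Sum>k=1..M. max 0 (real k - real j) * q k)"
    by (simp add: sum_subtractf sum_distrib_left)
  finally show ?thesis by (simp add: algebra_simps)
qed

lemma gain_eq:
  "gain M r (bvec M eps d j) (svec M) =
     eps * (real j * (\<Sum>k=1..M. r (bvec M eps d j) (svec M) k) - (\<Sum>k=1..M. real k * r (bvec M eps d j) (svec M) k))
     - d * (\<Sum>k=1..M. max 0 (real k - real j) * r (bvec M eps d j) (svec M) k)
     + (\<Sum>k=1..M. real k * r (bvec M eps d j) (svec M) k)"
proof -
  let ?q = "r (bvec M eps d j) (svec M)"
  have "gain M r (bvec M eps d j) (svec M) = (\<Sum>k=1..M. ?q k * bvec M eps d j k) + (\<Sum>k=1..M. real k * ?q k)"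
    unfolding gain_def sum.distrib[symmetric]
    by (rule sum.cong) (auto simp: svec_def algebra_simps)
  then show ?thesis using bvec_sum[where q = ?q and M = M and eps = eps and d = d and j = j] by simp
qed



lemma inst:
  fixes M :: nat and r :: mechanism and t eps eta :: real
  assumes M1: "M \<ge> 1" and mech: "is_mechanism M r" and ds: "DSIC M r"
    and eps: "0 < eps" "eps \<le> 1" and eta: "0 < eta" and t0: "0 \<le> t"
    and cr: "ereal t \<le> competitive_ratio M r"
  shows "t \<le> 1 / harm M + eta + eps"
proof -
  define K :: real where "K = max 2 (2 * real M / (eps * eta))"
  have K2: "K \<ge> 2" unfolding K_def by simp
  have KM: "eps * eta * K \<ge> 2 * real M"
  proof -
    have "K \<ge> 2 * real M / (eps * eta)" unfolding K_def by simp
    then show ?thesis using eps eta by (simp add: field_simps)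
  qed
  define D :: "nat \<Rightarrow> real" where "D j = K ^ (M + 1 - j) + 1" for j
  define b where "b j = bvec M eps (D j) j" for j
  define s where "s = svec M"
  define q where "q j = r (b j) s" for j
  define a where "a j = (\<Sum>k=1..M. q j k)" for j
  define E where "E j = (\<Sum>k=1..M. real k * q j k)" for j
  define B where "B j = (\<Sum>k=1..M. max 0 (real k - real j) * q j k)" for j
  have Kp: "K ^ n \<ge> 1" for n using K2 by (simp add: one_le_power)
  have hD: "D j \<ge> 2" for j using Kp[of "M + 1 - j"] unfolding D_def by simp
  have Dnn: "D j \<ge> 0" for j using hD[of j] by simp
  have bsub: "submodular_vec M (b j)" if "1 \<le> j" for j
    unfolding b_def using bvec_sub[of eps "D j" j M] eps Dnn that by simp
  have ssub: "submodular_vec M s" unfolding s_def by (rule svec_sub)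
  have qnn: "q j k \<ge> 0" if "1 \<le> j" "k \<le> M" for j k
    using mech bsub[OF that(1)] ssub that unfolding is_mechanism_def q_def by auto
  have qsum: "(\<Sum>k=0..M. q j k) = 1" if "1 \<le> j" for j
    using mech bsub[OF that(1)] ssub that unfolding is_mechanism_def q_def by auto
  have ha: "a j \<le> 1" if "1 \<le> j" for j
  proof -
    have "(\<Sum>k=0..M. q j k) = q j 0 + (\<Sum>k=Suc 0..M. q j k)" by (rule sum.atLeast_Suc_atMost) simp
    then show ?thesis using qsum[OF that] qnn[OF that, of 0] unfolding a_def by simp
  qed
  have hB: "B j \<ge> 0" if "1 \<le> j" for j
    unfolding B_def using qnn[OF that] by (intro sum_nonneg) auto
  have hE: "E j \<le> real j * a j + B j" if "1 \<le> j" for j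
  proof -
    have "E j \<le> (\<Sum>k=1..M. real j * q j k + max 0 (real k - real j) * q j k)"
      unfolding E_def
    proof (rule sum_mono)
      fix k assume "k \<in> {1..M}"
      then have "q j k \<ge> 0" using qnn[OF that] by auto
      moreover have "real k \<le> real j + max 0 (real k - real j)" by simp
      ultimately have "real k * q j k \<le> (real j + max 0 (real k - real j)) * q j k"
        by (intro mult_right_mono)
      then show "real k * q j k \<le> real j * q j k + max 0 (real k - real j) * q j k"
        by (simp add: algebra_simps)
    qed
    also have "\<dots> = real j * a j + B j" unfolding a_def B_def by (simp add: sum.distrib sum_distrib_left)
    finally show ?thesis .
  qed
  have hg: "t * real j \<le> eps * (real j * a j - E j) - D j * B j + E j" if j: "1 \<le> j" "j \<le> M" for j
  proof -
    have opt: "OPT M (b j) s = real j" unfolding b_def s_def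
      using bvec_OPT[of eps "D j" j M] eps Dnn j by simp
    have "(b j, s) \<in> {(b, s). submodular_vec M b \<and> submodular_vec M s \<and> OPT M b s > 0}"
      using bsub[OF j(1)] ssub opt j by simp
    then have "competitive_ratio M r \<le> ereal (gain M r (b j) s / OPT M (b j) s)"
      unfolding competitive_ratio_def by (rule INF_lower2) simp
    then have "ereal t \<le> ereal (gain M r (b j) s / real j)" using cr opt by (metis order_trans)
    then have "t \<le> gain M r (b j) s / real j" by simp
    then have "t * real j \<le> gain M r (b j) s" using j by (simp add: field_simps)
    also have "gain M r (b j) s = eps * (real j * a j - E j) - D j * B j + E j"
      unfolding b_def s_def gain_eq a_def E_def B_def q_def ..
    finally show ?thesis .
  qed
  have hd: "eps * (real j * a j - E j) - D j * B j \<ge> eps * (real j * a (j-1) - E (j-1)) - D j * B (j-1)"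
    if j: "2 \<le> j" "j \<le> M" for j
  proof -
    have "(\<Sum>k=1..M. r (b j) s k * b j k) \<ge> (\<Sum>k=1..M. r (b (j-1)) s k * b j k)"
      using ds bsub[of j] bsub[of "j-1"] ssub j unfolding DSIC_def by auto
    moreover have "(\<Sum>k=1..M. r (b j) s k * b j k) = eps * (real j * a j - E j) - D j * B j"
      unfolding b_def using bvec_sum[where q = "q j" and M = M and eps = eps and d = "D j" and j = j]
      unfolding a_def E_def B_def q_def b_def by simp
    moreover have "(\<Sum>k=1..M. r (b (j-1)) s k * b j k) = eps * (real j * a (j-1) - E (j-1))
        - D j * (\<Sum>k=1..M. max 0 (real k - real j) * q (j-1) k)"
      unfolding b_def using bvec_sum[where q = "q (j-1)" and M = M and eps = eps and d = "D j" and j = j]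
      unfolding a_def E_def B_def q_def b_def by simp
    moreover have "(\<Sum>k=1..M. max 0 (real k - real j) * q (j-1) k) \<le> B (j-1)"
      unfolding B_def
    proof (rule sum_mono)
      fix k assume "k \<in> {1..M}"
      then have "q (j-1) k \<ge> 0" using qnn[of "j-1" k] j by auto
      moreover have "max 0 (real k - real j) \<le> max 0 (real k - real (j-1))" using j by auto
      ultimately show "max 0 (real k - real j) * q (j-1) k \<le> max 0 (real k - real (j - 1)) * q (j-1) k"
        by (intro mult_right_mono)
    qed
    then have "D j * (\<Sum>k=1..M. max 0 (real k - real j) * q (j-1) k) \<le> D j * B (j-1)"
      using Dnn by (intro mult_left_mono) auto
    ultimately show ?thesis by linarith
  qed
  have hD1: "real M \<le> eta * (D 1 - 1)"
  proof -
    have "K \<le> K ^ M" using K2 M1 by (intro self_le_power) auto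
    then have "eta * K \<le> eta * K ^ M" using eta by simp
    moreover have "eps * (eta * K) \<le> eta * K" using eps eta K2 by (intro mult_left_le_one_le) auto
    ultimately show ?thesis using KM unfolding D_def by (simp add: algebra_simps)
  qed
  have hD2: "D j * real M \<le> eta * eps * (D (j-1) - 1)" if j: "2 \<le> j" "j \<le> M" for j
  proof -
    define P where "P = K ^ (M + 1 - j)"
    have P1: "P \<ge> 1" unfolding P_def by (rule Kp)
    have "M + 1 - (j - 1) = Suc (M + 1 - j)" using j by simp
    then have Dj1: "D (j-1) - 1 = K * P" unfolding D_def P_def by simp
    have "D j * real M = (P + 1) * real M" unfolding D_def P_def by simp
    also have "\<dots> \<le> (2 * real M) * P"
    proof -
      have "1 * real M \<le> P * real M" using P1 by (intro mult_right_mono) auto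
      then show ?thesis by (simp add: algebra_simps)
    qed
    also have "\<dots> \<le> (eps * eta * K) * P" using KM P1 by (intro mult_right_mono) auto
    also have "\<dots> = eta * eps * (D (j-1) - 1)" unfolding Dj1 by (simp add: algebra_simps)
    finally show ?thesis .
  qed
  show ?thesis
    by (rule core[where a = a and E = E and B = B and D = D, OF M1 eps eta t0])
       (use ha hB hE hg hd hD hD1 hD2 in auto)
qed



theorem theorem2:
  fixes M :: nat and r :: mechanism
  assumes "M \<ge> 1" and "is_mechanism M r" and "DSIC M r"
  shows "competitive_ratio M r \<le> ereal (1 / harm M)"
proof (rule ccontr)
  assume "\<not> competitive_ratio M r \<le> ereal (1 / harm M)"
  then have "ereal (1 / harm M) < competitive_ratio M r" by simp
  then obtain t where t1: "ereal (1 / harm M) < ereal t" and t2: "ereal t < competitive_ratio M r"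
    using ereal_dense2 by blast
  have tl: "1 / harm M < t" using t1 by simp
  have hp: "1 / harm M > (0::real)" using harm_pos[of M] assms(1) by simp
  have t0: "0 \<le> t" using hp tl by linarith
  define d where "d = (t - 1 / harm M) / 3"
  have d0: "d > 0" using tl unfolding d_def by simp
  have "t \<le> 1 / harm M + d + min 1 d"
    by (rule inst[OF assms]) (use d0 t0 t2 in auto)
  moreover have "min 1 d \<le> d" by simp
  ultimately have "t \<le> 1 / harm M + 2 * d" by linarith
  moreover have "t = 1 / harm M + 3 * d" unfolding d_def by (simp add: diff_divide_distrib)
  ultimately show False using d0 by linarith
qed

end
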